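(* Let $c>0$, $\theta_k>0$, $T_{\rm TDMA}>0$ and $0<\tau_k^{\max}<T_{\rm TDMA}$ be constants, and let $\varepsilon(\tau)=e^{-c\tau}$. Consider the problem (P6) $$\min_{\tau_k}\ \tau_k-\frac{1}{\theta_k}\log\!\left(1-\varepsilon(\tau_k)e^{\theta_k T_{\rm TDMA}}\right)\quad\text{s.t.}\quad 0\le\tau_k\le\tau_k^{\max}.$$ Then the optimal transmission time is $$\tau_k^{\rm opt}=\min\left(\tau_k^{\max},\ \widetilde\tau_k\right),\qquad\text{where}\qquad \widetilde\tau_k=\frac{1}{c}\log\!\left(1+\frac{c}{\theta_k}\right)+\frac{\theta_k}{c}T_{\rm TDMA}.$$
   Context: Setting: source $k$ in a TDMA system with frame length $T_{\rm TDMA}$ is allocated transmission time $\tau_k$ per frame; a transmission fails with probability $\varepsilon(\tau_k)=e^{-c\tau_k}$, and $\theta_k$ is the AoI exponent. The objective is considered on the set where it is defined, i.e. where $\varepsilon(\tau_k)e^{\theta_k T_{\rm TDMA}}<1$ (the condition for the moment generating function of the peak age to exist). *)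

theory Defs
  imports Complex_Main
begin

definition eps :: "real \<Rightarrow> real \<Rightarrow> real" where
  "eps c tau = exp (- c * tau)"

definition obj_P6 :: "real \<Rightarrow> real \<Rightarrow> real \<Rightarrow> real \<Rightarrow> real" where
  "obj_P6 c theta T tau = tau - (1 / theta) * ln (1 - eps c tau * exp (theta * T))"

text \<open>Feasible set of (P6), restricted to where the objective is defined.\<close>
definition feas_P6 :: "real \<Rightarrow> real \<Rightarrow> real \<Rightarrow> real \<Rightarrow> real set" where
  "feas_P6 c theta T taumax =
     {tau. 0 \<le> tau \<and> tau \<le> taumax \<and> eps c tau * exp (theta * T) < 1}"

end

theory Submission
  imports Defs
begin

lemma obj_eq: "obj_P6 c theta T tau = tau - (1/theta) * ln (1 - exp (theta*T - c*tau))"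
  unfolding obj_P6_def eps_def by (simp add: exp_add[symmetric] algebra_simps)

lemma feas_eq: "eps c tau * exp (theta * T) < 1 \<longleftrightarrow> exp (theta*T - c*tau) < 1"
  unfolding eps_def by (simp add: exp_add[symmetric] algebra_simps)

lemma Fderiv:
  assumes "exp (theta*T - c*x) < 1"
  shows "((\<lambda>t. t - (1/theta) * ln (1 - exp (theta*T - c*t))) has_real_derivative
     (1 - (1/theta) * (c * exp (theta*T - c*x) / (1 - exp (theta*T - c*x))))) (at x)"
proof -
  have "((\<lambda>t. 1 - exp (theta*T - c*t)) has_real_derivative (c * exp (theta*T - c*x))) (at x)"
    by (auto intro!: derivative_eq_intros)
  then have "((\<lambda>t. ln (1 - exp (theta*T - c*t))) has_real_derivative
      (c * exp (theta*T - c*x)) / (1 - exp (theta*T - c*x))) (at x)"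
    using assms by (auto intro!: derivative_eq_intros simp: field_simps)
  from DERIV_diff[OF DERIV_ident DERIV_cmult[OF this, of "1/theta"]] show ?thesis
    by simp
qed

lemma sign_lemma:
  fixes c theta u :: real
  assumes "c > 0" "theta > 0" "0 < u" "u < 1"
  shows "(1 - (1/theta) * (c * u / (1 - u)) > 0) \<longleftrightarrow> u < theta/(theta+c)"
    and "(1 - (1/theta) * (c * u / (1 - u)) < 0) \<longleftrightarrow> u > theta/(theta+c)"
proof -
  have "1 - (1/theta) * (c * u / (1 - u)) = (theta*(1-u) - c*u) / (theta*(1-u))"
    using assms by (simp add: field_simps)
  moreover have "theta*(1-u) > 0" using assms by simp
  moreover have "u < theta/(theta+c) \<longleftrightarrow> u*(theta+c) < theta"
    using assms by (simp add: field_simps)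
  moreover have "u > theta/(theta+c) \<longleftrightarrow> u*(theta+c) > theta"
    using assms by (simp add: field_simps)
  ultimately show "(1 - (1/theta) * (c * u / (1 - u)) > 0) \<longleftrightarrow> u < theta/(theta+c)"
    and "(1 - (1/theta) * (c * u / (1 - u)) < 0) \<longleftrightarrow> u > theta/(theta+c)"
    by (auto simp: divide_pos_pos zero_less_divide_iff divide_less_0_iff algebra_simps)
qed

lemma key_u:
  fixes c theta T z :: real
  assumes "c > 0" "theta > 0"
  shows "exp (theta*T - c*z) < theta/(theta+c) \<longleftrightarrow> z > (1/c) * ln (1 + c/theta) + (theta/c)*T"
    and "exp (theta*T - c*z) > theta/(theta+c) \<longleftrightarrow> z < (1/c) * ln (1 + c/theta) + (theta/c)*T"
proof -
  have q: "theta/(theta+c) = exp (- ln (1 + c/theta))"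
    using assms by (simp add: exp_minus field_simps)
  have r: "z > (1/c) * ln (1 + c/theta) + (theta/c)*T \<longleftrightarrow> theta*T - c*z < - ln (1 + c/theta)"
    using assms by (simp add: field_simps)
  have r2: "z < (1/c) * ln (1 + c/theta) + (theta/c)*T \<longleftrightarrow> theta*T - c*z > - ln (1 + c/theta)"
    using assms by (simp add: field_simps)
  show "exp (theta*T - c*z) < theta/(theta+c) \<longleftrightarrow> z > (1/c) * ln (1 + c/theta) + (theta/c)*T"
    unfolding q r by simp
  show "exp (theta*T - c*z) > theta/(theta+c) \<longleftrightarrow> z < (1/c) * ln (1 + c/theta) + (theta/c)*T"
    unfolding q r2 by simp
qed

lemma dom_lt1:
  fixes c theta T z :: real
  assumes "c > 0" "theta*T/c < z"
  shows "exp (theta*T - c*z) < 1"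
proof -
  have "theta*T < c*z" using assms by (simp add: field_simps)
  then show ?thesis by simp
qed

lemma F_cont:
  fixes c theta T x y :: real
  assumes "c > 0" "theta*T/c < x"
  shows "continuous_on {x..y} (\<lambda>t. t - (1/theta) * ln (1 - exp (theta*T - c*t)))"
  apply (rule continuous_at_imp_continuous_on)
  apply (intro ballI DERIV_isCont)
  apply (rule Fderiv)
  apply (rule dom_lt1)
  using assms by auto

lemma F_incr:
  fixes c theta T x y :: real
  assumes "c > 0" "theta > 0" "(1/c) * ln (1 + c/theta) + (theta/c)*T \<le> x" "x < y"
    "theta*T/c < x"
  shows "(\<lambda>t. t - (1/theta) * ln (1 - exp (theta*T - c*t))) x <
         (\<lambda>t. t - (1/theta) * ln (1 - exp (theta*T - c*t))) y"
proof (rule DERIV_pos_imp_increasing_open[OF assms(4)])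
  fix z assume z: "x < z" "z < y"
  have d: "exp (theta*T - c*z) < 1" by (rule dom_lt1) (use assms z in auto)
  have "exp (theta*T - c*z) < theta/(theta+c)" using key_u(1)[OF assms(1,2)] assms z by auto
  then have "1 - (1/theta) * (c * exp (theta*T - c*z) / (1 - exp (theta*T - c*z))) > 0"
    using sign_lemma(1)[OF assms(1,2), of "exp (theta*T - c*z)"] d by auto
  then show "\<exists>y. ((\<lambda>t. t - (1/theta) * ln (1 - exp (theta*T - c*t))) has_real_derivative y) (at z) \<and> y > 0"
    using Fderiv[OF d] by blast
next
  show "continuous_on {x..y} (\<lambda>t. t - (1/theta) * ln (1 - exp (theta*T - c*t)))"
    by (rule F_cont) (use assms in auto)
qed

lemma F_decr:
  fixes c theta T x y :: real
  assumes "c > 0" "theta > 0" "y \<le> (1/c) * ln (1 + c/theta) + (theta/c)*T" "x < y"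
    "theta*T/c < x"
  shows "(\<lambda>t. t - (1/theta) * ln (1 - exp (theta*T - c*t))) x >
         (\<lambda>t. t - (1/theta) * ln (1 - exp (theta*T - c*t))) y"
proof (rule DERIV_neg_imp_decreasing_open[OF assms(4)])
  fix z assume z: "x < z" "z < y"
  have d: "exp (theta*T - c*z) < 1" by (rule dom_lt1) (use assms z in auto)
  have "exp (theta*T - c*z) > theta/(theta+c)" using key_u(2)[OF assms(1,2)] assms z by auto
  then have "1 - (1/theta) * (c * exp (theta*T - c*z) / (1 - exp (theta*T - c*z))) < 0"
    using sign_lemma(2)[OF assms(1,2), of "exp (theta*T - c*z)"] d by auto
  then show "\<exists>y. ((\<lambda>t. t - (1/theta) * ln (1 - exp (theta*T - c*t))) has_real_derivative y) (at z) \<and> y < 0"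
    using Fderiv[OF d] by blast
next
  show "continuous_on {x..y} (\<lambda>t. t - (1/theta) * ln (1 - exp (theta*T - c*t)))"
    by (rule F_cont) (use assms in auto)
qed


lemma feas_iff:
  fixes c theta T taumax tau :: real
  assumes "c > 0"
  shows "tau \<in> feas_P6 c theta T taumax \<longleftrightarrow> 0 \<le> tau \<and> tau \<le> taumax \<and> theta*T/c < tau"
proof -
  have "exp (theta*T - c*tau) < 1 \<longleftrightarrow> theta*T/c < tau"
    using assms by (simp add: field_simps)
  then show ?thesis unfolding feas_P6_def feas_eq by auto
qed

theorem theorem2:
  fixes c theta T taumax :: real
  assumes "c > 0" and "theta > 0" and "T > 0"
    and "0 < taumax" and "taumax < T"
    and "feas_P6 c theta T taumax \<noteq> {}"
  shows "let tau_tilde = (1 / c) * ln (1 + c / theta) + (theta / c) * T;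
             tau_opt = min taumax tau_tilde
         in tau_opt \<in> feas_P6 c theta T taumax \<and>
            (\<forall>tau \<in> feas_P6 c theta T taumax.
               tau \<noteq> tau_opt \<longrightarrow> obj_P6 c theta T tau_opt < obj_P6 c theta T tau)"
proof -
  define tt where "tt = (1 / c) * ln (1 + c / theta) + (theta / c) * T"
  define F where "F = (\<lambda>t. t - (1/theta) * ln (1 - exp (theta*T - c*t)))"
  have objF: "\<And>t. obj_P6 c theta T t = F t" unfolding F_def obj_eq ..
  obtain t0 where "t0 \<in> feas_P6 c theta T taumax" using assms(6) by blast
  then have a_lt: "theta*T/c < taumax" using feas_iff[OF assms(1)] by auto
  have "0 < c/theta" using assms by simp
  then have "0 < ln (1 + c/theta)" by (simp add: ln_gt_zero)
  then have tt_gt: "theta*T/c < tt" unfolding tt_def using assms(1)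
    by (simp add: field_simps)
  have a_nn: "0 \<le> theta*T/c" using assms by simp
  have opt_in: "min taumax tt \<in> feas_P6 c theta T taumax"
    unfolding feas_iff[OF assms(1)] using a_lt tt_gt a_nn by (auto simp: min_def)
  have "\<forall>tau \<in> feas_P6 c theta T taumax. tau \<noteq> min taumax tt \<longrightarrow> F (min taumax tt) < F tau"
  proof (intro ballI impI)
    fix tau assume t: "tau \<in> feas_P6 c theta T taumax" "tau \<noteq> min taumax tt"
    then have t': "0 \<le> tau" "tau \<le> taumax" "theta*T/c < tau" using feas_iff[OF assms(1)] by auto
    show "F (min taumax tt) < F tau"
    proof (cases "tau < min taumax tt")
      case True
      show ?thesis using F_decr[OF assms(1,2), where x=tau and y="min taumax tt" and T=T] True t'
        unfolding F_def tt_def by auto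
    next
      case False
      then have "tt < tau" "tt \<le> taumax" using t t' by (auto simp: min_def split: if_splits)
      then show ?thesis using F_incr[OF assms(1,2), where x=tt and y=tau and T=T] tt_gt
        unfolding F_def tt_def by (auto simp: min_def)
    qed
  qed
  then show ?thesis using opt_in unfolding Let_def objF tt_def[symmetric] by auto
qed

end
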